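(* Let $\mu\in\mathbb N_0$, let $W\in\mathsf{Gr}_\mu(F)$ and let $A\subseteq F$ be a subalgebra (for the polynomial multiplication of $F=\mathbb C[\partial_1,\dots,\partial_n]$) with $W\cdot A=W$. Let $S$ be a Sato operator of $W$. Then: (1) for every $f\in A$ there is a unique $\mathtt L_S(f)\in\mathfrak S$ with $S\cdot f=\mathtt L_S(f)\cdot S$ in $\mathfrak S$, and $o(\mathtt L_S(f))=\deg(f)$; (2) $A\to\mathfrak S$, $f\mapsto\mathtt L_S(f)$, is an injective homomorphism of $\mathbb C$-algebras; (3) for every $f\in A$ and $w\in F$: $(w\circ\mathtt L_S(f))\circ S=(w\circ S)\cdot f$, i.e. the map $F\to W$, $w\mapsto w\circ S$, intertwines the right action of $\mathtt L_S(f)$ on $F$ with multiplication by $f$ on $W$.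
   Context: $n\in\mathbb N$, $\widehat B=\mathbb C[[x_1,\dots,x_n]]$, $\mathfrak m$ its maximal ideal, $\upsilon$ the $\mathfrak m$-adic valuation. $\mathfrak S$ is the algebra of formal sums $P=\sum_{\underline k\in\mathbb N_0^n}a_{\underline k}\underline\partial^{\underline k}$ ($a_{\underline k}\in\widehat B$) of finite order $o(P)=\sup_{\underline k}(|\underline k|-\upsilon(a_{\underline k}))$, with multiplication given by the Leibniz rule; it contains $\mathbb C[\partial_1,\dots,\partial_n]$. Writing $P=\sum\alpha_{\underline k,\underline i}\underline x^{\underline i}\underline\partial^{\underline k}$, the homogeneous components are $P_m=\sum_{|\underline i|-|\underline k|=m}\alpha_{\underline k,\underline i}\underline x^{\underline i}\underline\partial^{\underline k}$ and the symbol is $\sigma(P)=P_{-o(P)}$. $F=\mathfrak S/\mathfrak m\mathfrak S\cong\mathbb C[\partial_1,\dots,\partial_n]$ is a right $\mathfrak S$-module ($w\circ P$); the order of $w\in F$ is its degree. $P$ is regular if $w\mapsto w\circ\sigma(P)$ is injective on $F$. For $W\subseteq F$, $W_k=\{w\in W:o(w)\le k\}$; $\mathsf{Gr}_\mu(F)=\{W:\dim W_{\mu+k}=\binom{n+k}{n}\ \forall k\in\mathbb N_0\}$. A Sato operator of $W$ is a regular $S\in\mathfrak S$ with $o(S)=\mu$ and $W=F\circ S$. *)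

theory Defs
  imports Complex_Main "HOL-Library.Function_Algebras" "HOL-Library.Extended_Real"
begin

text \<open>Variables x_1..x_n are indexed by a finite type 'n (so n = CARD('n) \<ge> 1).  An element of \<frakS> is represented by its
  full coefficient family: P k i is the coefficient alpha_{k,i} of x^i d^k
  (x's to the left of the d's, as in P = sum a_k d^k with a_k in C[[x]]).
  An element w of F = C[d_1..d_n] is represented by its coefficient function
  (w k = coefficient of d^k), with finite support.\<close>

type_synonym 'n mi = "'n \<Rightarrow> nat"
type_synonym 'n dop = "'n mi \<Rightarrow> 'n mi \<Rightarrow> complex"
type_synonym 'n Fel = "'n mi \<Rightarrow> complex"

definition msize :: "('n::finite) mi \<Rightarrow> nat" where
  "msize k = (\<Sum>v\<in>UNIV. k v)"

text \<open>Order o(P) = sup (|k| - |i|) over the nonzero coefficients alpha_{k,i}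
  (equivalently sup_k (|k| - v(a_k))); -\<infinity> for P = 0.\<close>
definition ord :: "('n::finite) dop \<Rightarrow> ereal" where
  "ord P = Sup ((\<lambda>(k, i). ereal (real (msize k) - real (msize i))) ` {(k, i). P k i \<noteq> 0})"

definition Salg :: "('n::finite) dop set" where
  "Salg = {P. ord P < \<infinity>}"

text \<open>Multiplication by the Leibniz rule:
  (x^i d^k)(x^j d^l) = sum_{m \<le> k, m \<le> j} C(k,m) [j]_m x^{i+j-m} d^{k-m+l}.
  The coefficient of x^p d^q of P*Q collects the terms with i \<le> p, m \<le> k,
  k \<le> q + m, j = p - i + m, l = q + m - k (a finite sum for P of finite order).\<close>
definition dmul :: "('n::finite) dop \<Rightarrow> 'n dop \<Rightarrow> 'n dop" where
  "dmul P Q = (\<lambda>q p. \<Sum>(k, i, m) \<in> {(k, i, m). i \<le> p \<and> m \<le> k \<and> k \<le> q + m \<and> P k i \<noteq> 0}.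
      P k i * Q (q + m - k) (p - i + m)
      * (\<Prod>v\<in>UNIV. of_nat ((k v choose m v) * ((p - i + m) v choose m v) * fact (m v))))"

definition Sone :: "('n::finite) dop" where
  "Sone = (\<lambda>k i. if k = 0 \<and> i = 0 then 1 else 0)"

definition dscale :: "complex \<Rightarrow> ('n::finite) dop \<Rightarrow> 'n dop" where
  "dscale c P = (\<lambda>k i. c * P k i)"

definition hcomp :: "('n::finite) dop \<Rightarrow> int \<Rightarrow> 'n dop" where
  "hcomp P m = (\<lambda>k i. if int (msize i) - int (msize k) = m then P k i else 0)"

definition symb :: "('n::finite) dop \<Rightarrow> 'n dop" where
  "symb P = (\<lambda>k i. if ereal (real (msize i) - real (msize k)) = - ord P then P k i else 0)"

definition Fset :: "('n::finite) Fel set" where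
  "Fset = {w. finite {k. w k \<noteq> 0}}"

definition iotaF :: "('n::finite) Fel \<Rightarrow> 'n dop" where
  "iotaF w = (\<lambda>k i. if i = 0 then w k else 0)"

definition degF :: "('n::finite) Fel \<Rightarrow> ereal" where
  "degF w = ord (iotaF w)"

text \<open>Right S-module structure: w o P = class of w*P modulo m\<frakS>, i.e. the
  x^0-part of w*P.\<close>
definition ract :: "('n::finite) Fel \<Rightarrow> 'n dop \<Rightarrow> 'n Fel" (infixl \<open>\<circ>\<^sub>F\<close> 70) where
  "ract w P = (\<lambda>q. dmul (iotaF w) P q 0)"

definition pmul :: "('n::finite) Fel \<Rightarrow> 'n Fel \<Rightarrow> 'n Fel" where
  "pmul w f = (\<lambda>q. \<Sum>k\<in>{k. k \<le> q}. w k * f (q - k))"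

definition Fone :: "('n::finite) Fel" where
  "Fone = (\<lambda>k. if k = 0 then 1 else 0)"

definition Fscale :: "complex \<Rightarrow> ('n::finite) Fel \<Rightarrow> 'n Fel" where
  "Fscale c w = (\<lambda>k. c * w k)"

definition Fsubspace :: "('n::finite) Fel set \<Rightarrow> bool" where
  "Fsubspace W \<longleftrightarrow> W \<subseteq> Fset \<and> module.subspace Fscale W"

definition Fdim :: "('n::finite) Fel set \<Rightarrow> nat" where
  "Fdim V = vector_space.dim Fscale V"

definition Wfilt :: "('n::finite) Fel set \<Rightarrow> nat \<Rightarrow> 'n Fel set" where
  "Wfilt W k = {w \<in> W. degF w \<le> ereal (real k)}"

definition Gr :: "nat \<Rightarrow> ('n::finite) Fel set set" where
  "Gr \<mu> = {W. Fsubspace W \<and>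
     (\<forall>k::nat. Fdim (Wfilt W (\<mu> + k)) = (card (UNIV :: 'n set) + k) choose card (UNIV :: 'n set))}"

definition Fsubalgebra :: "('n::finite) Fel set \<Rightarrow> bool" where
  "Fsubalgebra A \<longleftrightarrow> A \<subseteq> Fset \<and> Fone \<in> A \<and>
     (\<forall>f\<in>A. \<forall>g\<in>A. f + g \<in> A \<and> pmul f g \<in> A) \<and> (\<forall>c. \<forall>f\<in>A. Fscale c f \<in> A)"

definition regular :: "('n::finite) dop \<Rightarrow> bool" where
  "regular P \<longleftrightarrow> P \<in> Salg \<and> inj_on (\<lambda>w. w \<circ>\<^sub>F symb P) Fset"

definition sato_op :: "nat \<Rightarrow> ('n::finite) Fel set \<Rightarrow> 'n dop \<Rightarrow> bool" where
  "sato_op \<mu> W S \<longleftrightarrow> regular S \<and> ord S = ereal (real \<mu>) \<and> W = (\<lambda>w. w \<circ>\<^sub>F S) ` Fset"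

definition LS :: "('n::finite) dop \<Rightarrow> 'n Fel \<Rightarrow> 'n dop" where
  "LS S f = (THE L. L \<in> Salg \<and> dmul S (iotaF f) = dmul L S)"

end

theory Submission
  imports Defs "HOL-Library.FuncSet"
begin



definition supp :: "('n::finite) Fel \<Rightarrow> 'n mi set" where "supp w = {k. w k \<noteq> 0}"
definition ffc :: "('n::finite) mi \<Rightarrow> 'n mi \<Rightarrow> complex" where
  "ffc k m = (\<Prod>v\<in>UNIV. of_nat ((k v choose m v) * fact (m v)))"
definition act1 :: "('n::finite) mi \<Rightarrow> 'n dop \<Rightarrow> 'n Fel" where
  "act1 a P = (\<lambda>q. \<Sum>m\<in>{m. m \<le> a \<and> a \<le> q + m}. P (q + m - a) m * ffc a m)"
definition monoF :: "('n::finite) mi \<Rightarrow> 'n Fel" where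
  "monoF k = (\<lambda>q. if q = k then 1 else 0)"

lemma fin_le: "finite {j::('n::finite) mi. j \<le> a}"
proof -
  have "{j::'n mi. j \<le> a} \<subseteq> PiE UNIV (\<lambda>v. {..a v})"
    by (auto simp: le_fun_def PiE_def Pi_def extensional_def)
  thus ?thesis by (rule finite_subset) (auto intro: finite_PiE)
qed

lemma msize_add[simp]: "msize (a + b) = msize a + msize b"
  by (simp add: msize_def sum.distrib)
lemma msize_diff: "b \<le> a \<Longrightarrow> msize (a - b) = msize a - msize b"
  unfolding msize_def by (simp add: sum_subtractf_nat le_fun_def)
lemma msize_mono: "a \<le> b \<Longrightarrow> msize a \<le> msize b"
  unfolding msize_def by (rule sum_mono) (simp add: le_fun_def)
lemma msize_ge: "k v \<le> msize k"
  unfolding msize_def by (rule member_le_sum) auto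
lemma msize_zero[simp]: "msize 0 = 0"
  by (simp add: msize_def)
lemma msize_strict: "a \<le> b \<Longrightarrow> a \<noteq> b \<Longrightarrow> msize a < msize b"
proof -
  assume ab: "a \<le> b" "a \<noteq> b"
  then obtain v where "a v \<noteq> b v" by auto
  with ab have "a v < b v" by (simp add: le_fun_def order_less_le)
  thus ?thesis unfolding msize_def using ab
    by (intro sum_strict_mono_ex1) (auto simp: le_fun_def)
qed

lemma fin_size: "finite {k::('n::finite) mi. msize k \<le> N}"
  by (rule finite_subset[OF _ fin_le[of "\<lambda>_. N"]]) (auto simp: le_fun_def intro: order_trans[OF msize_ge])

lemma ract_eq:
  fixes w :: "('n::finite) Fel"
  assumes "finite K" "supp w \<subseteq> K"
  shows "ract w P q = (\<Sum>k\<in>K. w k * act1 k P q)"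
proof -
  have fs: "finite (supp w)" using assms finite_subset by blast
  let ?D = "{(k, i, m). i \<le> (0::'n mi) \<and> m \<le> k \<and> k \<le> q + m \<and> iotaF w k i \<noteq> 0}"
  have D: "?D = (\<lambda>(k,m). (k,0,m)) ` (SIGMA k:supp w. {m. m \<le> k \<and> k \<le> q + m})"
    apply (auto simp: iotaF_def supp_def le_fun_def split: if_splits)
    done
  have inj: "inj_on (\<lambda>(k,m). (k,0::'n mi,m)) X" for X by (auto simp: inj_on_def)
  have "ract w P q = (\<Sum>(k,i,m)\<in>?D. iotaF w k i * P (q + m - k) (0 - i + m) *
      (\<Prod>v\<in>UNIV. of_nat ((k v choose m v) * ((0 - i + m) v choose m v) * fact (m v))))"
    by (simp add: ract_def dmul_def)
  also have "\<dots> = (\<Sum>(k,m)\<in>(SIGMA k:supp w. {m. m \<le> k \<and> k \<le> q + m}). w k * (P (q + m - k) m * ffc k m))"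
    unfolding D by (subst sum.reindex[OF inj]) (auto intro!: sum.cong simp: iotaF_def ffc_def)
  also have "\<dots> = (\<Sum>k\<in>supp w. w k * act1 k P q)"
    by (subst sum.Sigma[symmetric]) (auto simp: fs fin_le act1_def sum_distrib_left intro: finite_subset[OF _ fin_le])
  also have "\<dots> = (\<Sum>k\<in>K. w k * act1 k P q)"
    by (rule sum.mono_neutral_left) (use assms in \<open>auto simp: supp_def\<close>)
  finally show ?thesis .
qed

lemma Fset_supp: "w \<in> Fset \<longleftrightarrow> finite (supp w)"
  by (simp add: Fset_def supp_def)

lemma ract_expand:
  fixes w :: "('n::finite) Fel"
  assumes "w \<in> Fset"
  shows "ract w P = (\<lambda>q. \<Sum>k\<in>supp w. w k * act1 k P q)"
  using ract_eq[of "supp w" w P] assms by (auto simp: Fset_supp)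

lemma supp_mono: "supp (monoF k) = {k}"
  unfolding supp_def monoF_def by auto

lemma mono_Fset: "monoF k \<in> Fset"
  by (simp add: Fset_supp supp_mono)

lemma ract_mono: "ract (monoF k) P = act1 k P"
proof (rule ext)
  fix q
  have "ract (monoF k) P q = (\<Sum>k'\<in>{k}. monoF k k' * act1 k' P q)"
    by (rule ract_eq) (simp_all add: supp_mono)
  thus "ract (monoF k) P q = act1 k P q" by (simp add: monoF_def)
qed

lemma ract_add:
  fixes u v :: "('n::finite) Fel"
  assumes "u \<in> Fset" "v \<in> Fset"
  shows "ract (u + v) P = ract u P + ract v P"
proof (rule ext)
  fix q
  let ?K = "supp u \<union> supp v"
  have f: "finite ?K" using assms by (simp add: Fset_supp)
  have "ract (u + v) P q = (\<Sum>k\<in>?K. (u + v) k * act1 k P q)"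
    by (rule ract_eq[OF f]) (auto simp: supp_def)
  also have "\<dots> = (\<Sum>k\<in>?K. u k * act1 k P q) + (\<Sum>k\<in>?K. v k * act1 k P q)"
    by (simp add: distrib_right sum.distrib)
  also have "\<dots> = ract u P q + ract v P q"
    using ract_eq[OF f, of u P q] ract_eq[OF f, of v P q] by auto
  finally show "ract (u + v) P q = (ract u P + ract v P) q" by simp
qed

lemma ract_scale:
  fixes u :: "('n::finite) Fel"
  assumes "u \<in> Fset"
  shows "ract (Fscale c u) P = Fscale c (ract u P)"
proof (rule ext)
  fix q
  have f: "finite (supp u)" using assms by (simp add: Fset_supp)
  have "ract (Fscale c u) P q = (\<Sum>k\<in>supp u. Fscale c u k * act1 k P q)"
    by (rule ract_eq[OF f]) (auto simp: supp_def Fscale_def)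
  also have "\<dots> = c * ract u P q"
    using ract_eq[OF f, of u P q] by (simp add: Fscale_def sum_distrib_left mult.assoc)
  finally show "ract (Fscale c u) P q = Fscale c (ract u P) q" by (simp add: Fscale_def)
qed

lemma ract_zero: "ract 0 P = 0"
  by (rule ext, subst ract_eq[of "{}"]) (auto simp: supp_def)

lemma fin_M: "finite {m::('n::finite) mi. m \<le> a \<and> a \<le> q + m}"
  by (rule finite_subset[OF _ fin_le[of a]]) auto

lemma act1_add: "act1 a (P + Q) = act1 a P + act1 a Q"
  by (rule ext) (simp add: act1_def distrib_right sum.distrib)
lemma act1_diff: "act1 a (P - Q) = act1 a P - act1 a Q"
  by (rule ext) (simp add: act1_def left_diff_distrib sum_subtractf)
lemma act1_scale: "act1 a (dscale c P) = Fscale c (act1 a P)"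
  by (rule ext) (simp add: act1_def dscale_def Fscale_def sum_distrib_left mult.assoc)

lemma ffc_self_nz: "ffc j j \<noteq> 0"
  by (simp add: ffc_def)

lemma act1_split:
  "act1 j P q = P q j * ffc j j + (\<Sum>m\<in>{m. m \<le> j \<and> m \<noteq> j \<and> j \<le> q + m}. P (q + m - j) m * ffc j m)"
proof -
  have e: "{m. m \<le> j \<and> j \<le> q + m} = insert j {m. m \<le> j \<and> m \<noteq> j \<and> j \<le> q + m}"
    by (auto simp: le_fun_def)
  have f: "finite {m. m \<le> j \<and> m \<noteq> j \<and> j \<le> q + m}"
    by (rule finite_subset[OF _ fin_le[of j]]) auto
  show ?thesis unfolding act1_def e by (subst sum.insert[OF f]) auto
qed

lemma faithful:
  fixes P Q :: "('n::finite) dop"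
  assumes "\<And>a. act1 a P = act1 a Q"
  shows "P = Q"
proof -
  let ?D = "P - Q"
  have z: "act1 a ?D = 0" for a using assms by (simp add: act1_diff)
  have "\<forall>q. ?D q j = 0" for j
  proof (induction j rule: measure_induct_rule[of msize])
    case (less j)
    show ?case
    proof
      fix q
      have "(\<Sum>m\<in>{m. m \<le> j \<and> m \<noteq> j \<and> j \<le> q + m}. ?D (q + m - j) m * ffc j m) = 0"
      proof (rule sum.neutral, rule ballI)
        fix m assume "m \<in> {m. m \<le> j \<and> m \<noteq> j \<and> j \<le> q + m}"
        hence "msize m < msize j" using msize_strict by blast
        hence "\<forall>q. ?D q m = 0" using less by blast
        thus "?D (q + m - j) m * ffc j m = 0" by simp
      qed
      with act1_split[of j ?D q] z[of j] have "?D q j * ffc j j = 0" by (simp add: fun_eq_iff)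
      thus "?D q j = 0" using ffc_self_nz[of j] by auto
    qed
  qed
  thus ?thesis by (simp add: fun_eq_iff)
qed

definition bnd :: "('n::finite) Fel \<Rightarrow> nat \<Rightarrow> bool" where
  "bnd w N \<longleftrightarrow> (\<forall>q. w q \<noteq> 0 \<longrightarrow> msize q \<le> N)"
definition obnd :: "('n::finite) dop \<Rightarrow> nat \<Rightarrow> bool" where
  "obnd P d \<longleftrightarrow> (\<forall>k i. P k i \<noteq> 0 \<longrightarrow> msize k \<le> msize i + d)"

lemma bnd_Fset: "bnd w N \<Longrightarrow> w \<in> Fset"
  unfolding Fset_def bnd_def mem_Collect_eq by (rule finite_subset[OF _ fin_size[of N]]) auto

lemma ord_upper: "P k i \<noteq> 0 \<Longrightarrow> ereal (real (msize k) - real (msize i)) \<le> ord P"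
  unfolding ord_def by (rule Sup_upper) auto

lemma obnd_ord: "obnd P d \<Longrightarrow> ord P \<le> ereal (real d)"
  unfolding ord_def
proof (rule Sup_least, clarsimp)
  fix a b assume "obnd P d" "P a b \<noteq> 0"
  hence "msize a \<le> msize b + d" by (auto simp: obnd_def)
  hence "real (msize a) \<le> real (msize b + d)" by (simp only: of_nat_le_iff)
  thus "real (msize a) - real (msize b) \<le> real d" by simp
qed

lemma obnd_Salg: "obnd P d \<Longrightarrow> P \<in> Salg"
  using obnd_ord[of P d] by (auto simp: Salg_def)

lemma ord_obnd: "ord P \<le> ereal (real d) \<Longrightarrow> obnd P d"
  unfolding obnd_def
proof (intro allI impI)
  fix k i assume a: "ord P \<le> ereal (real d)" "P k i \<noteq> 0"
  have "ereal (real (msize k) - real (msize i)) \<le> ereal (real d)"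
    using ord_upper[of P k i, OF a(2)] a(1) by (rule order_trans)
  hence "real (msize k) \<le> real (msize i + d)" by simp
  thus "msize k \<le> msize i + d" by (simp only: of_nat_le_iff)
qed

lemma Salg_obnd: "P \<in> Salg \<Longrightarrow> \<exists>d. obnd P d"
proof -
  assume "P \<in> Salg"
  hence "ord P < \<infinity>" by (simp add: Salg_def)
  then obtain r where r: "ord P \<le> ereal r" by (cases "ord P") auto
  have "ord P \<le> ereal (real (nat \<lceil>r\<rceil>))"
    by (rule order_trans[OF r]) (simp add: real_nat_ceiling_ge)
  thus ?thesis using ord_obnd by blast
qed

lemma act1_bnd:
  assumes "obnd P d"
  shows "bnd (act1 a P) (msize a + d)"
  unfolding bnd_def
proof (intro allI impI)
  fix q assume "act1 a P q \<noteq> 0"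
  then obtain m where m: "m \<le> a" "a \<le> q + m" "P (q + m - a) m \<noteq> 0"
    unfolding act1_def by (rule sum.not_neutral_contains_not_neutral) auto
  have "msize (q + m - a) \<le> msize m + d" using m assms by (auto simp: obnd_def)
  thus "msize q \<le> msize a + d" using m by (simp add: msize_diff)
qed

lemma act1_Fset: "obnd P d \<Longrightarrow> act1 a P \<in> Fset"
  using act1_bnd bnd_Fset by blast

lemma ract_bnd:
  fixes w :: "('n::finite) Fel"
  assumes "w \<in> Fset" "bnd w N" "obnd P d"
  shows "bnd (ract w P) (N + d)"
  unfolding bnd_def
proof (intro allI impI)
  fix q assume "ract w P q \<noteq> 0"
  then obtain k where k: "k \<in> supp w" "act1 k P q \<noteq> 0"
    unfolding ract_expand[OF assms(1)] by (rule sum.not_neutral_contains_not_neutral) auto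
  have "msize k \<le> N" using k assms(2) by (auto simp: bnd_def supp_def)
  moreover have "msize q \<le> msize k + d" using act1_bnd[OF assms(3), of k] k by (auto simp: bnd_def)
  ultimately show "msize q \<le> N + d" by simp
qed

lemma Fset_bnd: "w \<in> Fset \<Longrightarrow> \<exists>N. bnd w N"
proof -
  assume "w \<in> Fset"
  hence f: "finite (msize ` supp w)" by (simp add: Fset_supp)
  show ?thesis unfolding bnd_def
  proof (rule exI[of _ "Max (msize ` supp w)"], intro allI impI)
    fix q assume "w q \<noteq> 0"
    thus "msize q \<le> Max (msize ` supp w)" by (intro Max_ge[OF f]) (auto simp: supp_def)
  qed
qed

lemma ract_Fset: "w \<in> Fset \<Longrightarrow> P \<in> Salg \<Longrightarrow> ract w P \<in> Fset"
proof -
  assume a: "w \<in> Fset" "P \<in> Salg"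
  obtain N where N: "bnd w N" using Fset_bnd[OF a(1)] by blast
  obtain d where d: "obnd P d" using Salg_obnd[OF a(2)] by blast
  show ?thesis using ract_bnd[OF a(1) N d] by (rule bnd_Fset)
qed




lemma ff_split: "(a choose (j+t)) * fact (j+t) = (a choose j) * fact j * (((a - j) choose t) * fact t :: nat)"
proof (cases "j + t \<le> a")
  case True
  have f1: "fact (j+t) * fact (a - (j+t)) * (a choose (j+t)) = (fact a :: nat)"
    using binomial_fact_lemma[OF True] .
  have f2: "fact j * fact (a - j) * (a choose j) = (fact a :: nat)"
    using binomial_fact_lemma[of j a] True by simp
  have f3: "fact t * fact (a - j - t) * ((a - j) choose t) = (fact (a - j) :: nat)"
    using binomial_fact_lemma[of t "a - j"] True by simp
  have e: "a - (j + t) = a - j - t" by simp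
  have "(a choose (j+t)) * fact (j+t) * fact (a - j - t) =
        (a choose j) * fact j * (((a - j) choose t) * fact t) * fact (a - j - t)"
    using f1 f2 f3 e by (metis mult.commute mult.left_commute)
  thus ?thesis by simp
next
  case False
  hence "a choose (j+t) = 0" by (simp add: binomial_eq_0)
  moreover have "(a choose j) * ((a - j) choose t) = 0"
    using False by (cases "j \<le> a") (auto simp: binomial_eq_0)
  ultimately show ?thesis by (metis mult_0 mult_0_right mult.commute mult.assoc)
qed

lemma core1:
  "(\<Sum>x\<le>l. (l choose x) * (j' choose x) * fact x * ((a choose (j+j'-x)) * fact (j+j'-x)))
    = (a choose j) * fact j * (((a - j + l) choose j') * fact j' :: nat)"
proof (cases "j \<le> a")
  case False
  have "(l choose x) * (j' choose x) * fact x * ((a choose (j+j'-x)) * fact (j+j'-x)) = 0" for x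
    using False by (cases "x \<le> j'") (auto simp: binomial_eq_0)
  hence "(\<Sum>x\<le>l. (l choose x) * (j' choose x) * fact x * ((a choose (j+j'-x)) * fact (j+j'-x))) = 0"
    by (intro sum.neutral) blast
  thus ?thesis using False by (simp add: binomial_eq_0)
next
  case True
  define A where "A = a - j"
  have t: "(l choose x) * (j' choose x) * fact x * ((a choose (j+j'-x)) * fact (j+j'-x))
      = (a choose j) * fact j * fact j' * ((l choose x) * (if x \<le> j' then (A choose (j' - x)) else 0))" for x
  proof (cases "x \<le> j'")
    case True
    have "j + j' - x = j + (j' - x)" using True by simp
    hence "(a choose (j+j'-x)) * fact (j+j'-x) = (a choose j) * fact j * ((A choose (j' - x)) * fact (j' - x))"
      using ff_split[of a j "j' - x"] by (simp add: A_def)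
    moreover have "(j' choose x) * fact x * fact (j' - x) = fact j'"
      using binomial_fact_lemma[OF True] by (simp add: mult.commute mult.left_commute)
    ultimately show ?thesis using True
      by (simp add: algebra_simps)
  qed simp
  have "(\<Sum>x\<le>l. (l choose x) * (if x \<le> j' then (A choose (j' - x)) else 0)) = (\<Sum>x\<le>j'. (l choose x) * (A choose (j' - x)))"
  proof -
    have "(\<Sum>x\<le>l. (l choose x) * (if x \<le> j' then (A choose (j' - x)) else 0))
        = (\<Sum>x\<le>l + j'. (l choose x) * (if x \<le> j' then (A choose (j' - x)) else 0))"
      by (rule sum.mono_neutral_left) auto
    also have "\<dots> = (\<Sum>x\<le>j'. (l choose x) * (A choose (j' - x)))"
      by (rule sum.mono_neutral_cong_right) auto
    finally show ?thesis .
  qed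
  also have "\<dots> = (l + A) choose j'" by (rule vandermonde)
  finally have v: "(\<Sum>x\<le>l. (l choose x) * (if x \<le> j' then (A choose (j' - x)) else 0)) = (l + A) choose j'" .
  have "a - j + l = l + A" by (simp add: A_def)
  thus ?thesis unfolding t sum_distrib_left[symmetric] v by (simp add: algebra_simps)
qed

definition dcoef :: "('n::finite) mi \<Rightarrow> 'n mi \<Rightarrow> 'n mi \<Rightarrow> complex" where
  "dcoef k m j = (\<Prod>v\<in>UNIV. of_nat ((k v choose m v) * (j v choose m v) * fact (m v)))"

lemma le_PiE: "{m::('n::finite) mi. m \<le> l} = PiE UNIV (\<lambda>v. {..l v})"
  by (auto simp: le_fun_def PiE_def Pi_def extensional_def)

lemma core_multi:
  fixes l j j' a :: "('n::finite) mi"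
  shows "(\<Sum>m\<in>{m. m \<le> l}. dcoef l m j' * ffc a (j + j' - m)) = ffc a j * ffc (a - j + l) j'"
proof -
  define G where "G v x = (l v choose x) * (j' v choose x) * fact x * ((a v choose (j v + j' v - x)) * fact (j v + j' v - x))" for v x
  have t: "dcoef l m j' * ffc a (j + j' - m) = (\<Prod>v\<in>UNIV. of_nat (G v (m v)))" for m
    by (simp add: dcoef_def ffc_def G_def prod.distrib[symmetric] mult.assoc)
  have "(\<Sum>m\<in>{m. m \<le> l}. dcoef l m j' * ffc a (j + j' - m)) = (\<Sum>m\<in>PiE UNIV (\<lambda>v. {..l v}). \<Prod>v\<in>UNIV. (of_nat (G v (m v)) :: complex))"
    unfolding t le_PiE ..
  also have "\<dots> = (\<Prod>v\<in>UNIV. \<Sum>x\<le>l v. (of_nat (G v x) :: complex))"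
    by (rule prod_sum_PiE[symmetric]) auto
  also have "\<dots> = (\<Prod>v\<in>UNIV. of_nat ((a v choose j v) * fact (j v)) * of_nat (((a v - j v + l v) choose j' v) * fact (j' v)))"
  proof (rule prod.cong[OF refl])
    fix v
    have "(\<Sum>x\<le>l v. G v x) = (a v choose j v) * fact (j v) * (((a v - j v + l v) choose j' v) * fact (j' v))"
      unfolding G_def by (rule core1)
    from arg_cong[OF this, of "of_nat :: nat \<Rightarrow> complex"]
    show "(\<Sum>x\<le>l v. (of_nat (G v x) :: complex)) = of_nat ((a v choose j v) * fact (j v)) * of_nat (((a v - j v + l v) choose j' v) * fact (j' v))"
      by (simp only: of_nat_sum of_nat_mult mult.assoc)
  qed
  also have "\<dots> = ffc a j * ffc (a - j + l) j'"
    by (simp add: ffc_def prod.distrib)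
  finally show ?thesis .
qed




lemma sum_bij_nz:
  fixes g :: "'a \<Rightarrow> 'c::comm_monoid_add" and h :: "'b \<Rightarrow> 'c"
  assumes "finite S" "finite T"
    and fw: "\<And>x. x \<in> S \<Longrightarrow> g x \<noteq> 0 \<Longrightarrow> j x \<in> T \<and> i (j x) = x \<and> h (j x) = g x"
    and bw: "\<And>y. y \<in> T \<Longrightarrow> h y \<noteq> 0 \<Longrightarrow> i y \<in> S \<and> j (i y) = y \<and> g (i y) = h y"
  shows "sum g S = sum h T"
proof -
  have "sum g S = sum g {x\<in>S. g x \<noteq> 0}"
    by (rule sum.mono_neutral_right) (use assms in auto)
  also have "\<dots> = sum h {y\<in>T. h y \<noteq> 0}"
    by (rule sum.reindex_bij_witness[of _ i j]) (use fw bw in \<open>auto\<close>)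
  also have "\<dots> = sum h T"
    by (rule sum.mono_neutral_left) (use assms in auto)
  finally show ?thesis .
qed

lemma ffc_nz: "ffc a j \<noteq> 0 \<Longrightarrow> j \<le> a"
  unfolding ffc_def le_fun_def by (auto simp: binomial_eq_0_iff) (metis not_le)

lemma dcoef_nz: "dcoef k m j \<noteq> 0 \<Longrightarrow> m \<le> j"
  unfolding dcoef_def le_fun_def by (auto simp: binomial_eq_0_iff) (metis not_le)

lemma msize_le_mono: "j \<le> a \<Longrightarrow> msize j \<le> msize a" by (rule msize_mono)

lemma R1_act:
  fixes P Q :: "('n::finite) dop"
  assumes dP: "obnd P dP" and dQ: "obnd Q dQ"
  shows "ract (act1 a P) Q q = act1 a (dmul P Q) q"
proof -
  define L1 where "L1 = {l::'n mi. msize l \<le> msize a + dP}"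
  define J1 where "J1 = {j::'n mi. j \<le> a}"
  define L2 where "L2 = {l::'n mi. msize l \<le> msize a + dP + dQ}"
  define J2 where "J2 = {j::'n mi. msize j \<le> msize a + dP}"
  define X where "X = L1 \<times> J1 \<times> L2 \<times> J2"
  have finX: "finite X" unfolding X_def L1_def J1_def L2_def J2_def
    by (intro finite_cartesian_product fin_size fin_le)
  define tL where "tL = (\<lambda>(l,j,l',j'). P l j * Q l' j' * (ffc a j * ffc (a - j + l) j') * (if a + l + l' = q + j + j' then 1 else (0::complex)))"
  define K where "K = {k::'n mi. msize k \<le> msize a + dP}"
  have finK: "finite K" unfolding K_def by (rule fin_size)
  define Sig where "Sig = (SIGMA k:K. {j. j \<le> a \<and> a \<le> k + j} \<times> {m. m \<le> k \<and> k \<le> q + m})"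
  have finSig: "finite Sig" unfolding Sig_def
    by (intro finite_SigmaI finK finite_cartesian_product fin_M)
  define gL where "gL = (\<lambda>(k,j,m). P (k + j - a) j * ffc a j * (Q (q + m - k) m * ffc k m))"
  have "ract (act1 a P) Q q = (\<Sum>k\<in>K. act1 a P k * act1 k Q q)"
    by (rule ract_eq[OF finK]) (use act1_bnd[OF dP, of a] in \<open>auto simp: supp_def bnd_def K_def\<close>)
  also have "\<dots> = (\<Sum>k\<in>K. \<Sum>(j,m)\<in>{j. j \<le> a \<and> a \<le> k + j} \<times> {m. m \<le> k \<and> k \<le> q + m}. gL (k,j,m))"
    by (rule sum.cong[OF refl]) (simp add: act1_def gL_def sum_product sum.cartesian_product)
  also have "\<dots> = sum gL Sig"
    unfolding Sig_def by (subst sum.Sigma) (auto intro: finK finite_cartesian_product fin_M)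
  also have "\<dots> = sum tL X"
  proof (rule sum_bij_nz[OF finSig finX, where j="\<lambda>(k,j,m). (k + j - a, j, q + m - k, m)" and i="\<lambda>(l,j,l',j'). (a - j + l, j, j')"])
    fix x assume x: "x \<in> Sig" "gL x \<noteq> 0"
    obtain k j m where xe: "x = (k,j,m)" by (cases x) auto
    have k: "msize k \<le> msize a + dP" and h1: "j \<le> a" "a \<le> k + j" "m \<le> k" "k \<le> q + m"
      using x(1) by (auto simp: Sig_def K_def xe)
    have nz: "P (k + j - a) j \<noteq> 0" "Q (q + m - k) m \<noteq> 0" using x(2) by (auto simp: gL_def xe)
    have e1: "a - j + (k + j - a) = k" using h1 unfolding le_fun_def fun_eq_iff plus_fun_def fun_diff_def
        apply (intro allI) subgoal premises prems for v using prems[THEN spec[of _ v]] by arith done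
    have e2: "a + (k + j - a) + (q + m - k) = q + j + m" using h1 unfolding le_fun_def fun_eq_iff plus_fun_def fun_diff_def
        apply (intro allI) subgoal premises prems for v using prems[THEN spec[of _ v]] by arith done
    have "msize (k + j - a) \<le> msize j + dP" using dP nz by (auto simp: obnd_def)
    moreover have "msize j \<le> msize a" by (rule msize_mono[OF h1(1)])
    moreover have "msize (q + m - k) \<le> msize m + dQ" using dQ nz by (auto simp: obnd_def)
    moreover have "msize m \<le> msize k" using h1 by (intro msize_mono) auto
    ultimately have "(k + j - a, j, q + m - k, m) \<in> X"
      using k h1 by (auto simp: X_def L1_def J1_def L2_def J2_def)
    thus "(case x of (k,j,m) \<Rightarrow> (k + j - a, j, q + m - k, m)) \<in> X \<and>
      (case (case x of (k,j,m) \<Rightarrow> (k + j - a, j, q + m - k, m)) of (l,j,l',j') \<Rightarrow> (a - j + l, j, j')) = x \<and>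
      tL (case x of (k,j,m) \<Rightarrow> (k + j - a, j, q + m - k, m)) = gL x"
      by (simp add: xe e1 e2 tL_def gL_def)
  next
    fix y assume y: "y \<in> X" "tL y \<noteq> 0"
    obtain l j l' j' where ye: "y = (l,j,l',j')" by (cases y) auto
    have c: "a + l + l' = q + j + j'" using y(2) by (auto simp: tL_def ye split: if_splits)
    have nz: "P l j \<noteq> 0" "Q l' j' \<noteq> 0" "ffc a j \<noteq> 0" "ffc (a - j + l) j' \<noteq> 0"
      using y(2) by (auto simp: tL_def ye)
    have h1: "j \<le> a" "j' \<le> a - j + l" using nz ffc_nz by auto
    have g1: "a \<le> a - j + l + j" using h1 unfolding le_fun_def fun_eq_iff plus_fun_def fun_diff_def
        apply (intro allI) subgoal premises prems for v using prems[THEN spec[of _ v]] by arith done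
    have g2: "a - j + l \<le> q + j'" using c h1 unfolding le_fun_def fun_eq_iff plus_fun_def fun_diff_def
        apply (intro allI) subgoal premises prems for v using prems[THEN spec[of _ v]] by arith done
    have g3: "a - j + l + j - a = l" using h1 unfolding le_fun_def fun_eq_iff plus_fun_def fun_diff_def
        apply (intro allI) subgoal premises prems for v using prems[THEN spec[of _ v]] by arith done
    have g4: "q + j' - (a - j + l) = l'" using c h1 unfolding le_fun_def fun_eq_iff plus_fun_def fun_diff_def
        apply (intro allI) subgoal premises prems for v using prems[THEN spec[of _ v]] by arith done
    have "msize l \<le> msize j + dP" using dP nz by (auto simp: obnd_def)
    moreover have "msize j \<le> msize a" by (rule msize_mono[OF h1(1)])
    ultimately have "msize (a - j + l) \<le> msize a + dP" using h1 by (simp add: msize_diff)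
    hence "(a - j + l, j, j') \<in> Sig" using h1 g1 g2 by (auto simp: Sig_def K_def)
    thus "(case y of (l,j,l',j') \<Rightarrow> (a - j + l, j, j')) \<in> Sig \<and>
      (case (case y of (l,j,l',j') \<Rightarrow> (a - j + l, j, j')) of (k,j,m) \<Rightarrow> (k + j - a, j, q + m - k, m)) = y \<and>
      gL (case y of (l,j,l',j') \<Rightarrow> (a - j + l, j, j')) = tL y"
      by (simp add: ye g3 g4 c tL_def gL_def)
  qed
  finally have LHS: "ract (act1 a P) Q q = sum tL X" .

  define Mp where "Mp = {p::'n mi. p \<le> a \<and> a \<le> q + p}"
  define D where "D = (\<lambda>p. {(k, i, m). i \<le> p \<and> m \<le> k \<and> k \<le> (q + p - a) + m \<and> P k i \<noteq> 0})"
  have finD: "finite (D p)" for p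
  proof (rule finite_subset)
    show "D p \<subseteq> {k. msize k \<le> msize p + dP} \<times> {i. i \<le> p} \<times> {m. msize m \<le> msize p + dP}"
    proof (clarsimp simp: D_def)
      fix k i m assume h: "i \<le> p" "m \<le> k" "P k i \<noteq> 0"
      have "msize k \<le> msize i + dP" using dP h by (auto simp: obnd_def)
      moreover have "msize i \<le> msize p" "msize m \<le> msize k" using h msize_mono by auto
      ultimately show "msize k \<le> msize p + dP \<and> msize m \<le> msize p + dP" by linarith
    qed
  qed (intro finite_cartesian_product fin_size fin_le)
  define gR where "gR = (\<lambda>(p,k,i,m). P k i * Q (q + p - a + m - k) (p - i + m) * dcoef k m (p - i + m) * ffc a p)"
  define Y where "Y = (SIGMA x:X. {m. m \<le> fst x})"
  have finY: "finite Y" unfolding Y_def by (intro finite_SigmaI finX fin_le)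
  define tR where "tR = (\<lambda>((l,j,l',j'),m). P l j * Q l' j' * (dcoef l m j' * ffc a (j + j' - m)) * (if a + l + l' = q + j + j' then 1 else (0::complex)))"
  have "act1 a (dmul P Q) q = (\<Sum>p\<in>Mp. \<Sum>(k,i,m)\<in>D p. gR (p,k,i,m))"
    unfolding act1_def Mp_def
    by (rule sum.cong[OF refl]) (simp add: dmul_def D_def gR_def dcoef_def sum_distrib_right case_prod_beta)
  also have "\<dots> = sum gR (SIGMA p:Mp. D p)"
    unfolding Mp_def by (subst sum.Sigma) (auto intro: finD fin_M)
  also have "\<dots> = sum tR Y"
  proof -
  define jf where "jf = (\<lambda>(p::'n mi,k::'n mi,i::'n mi,m::'n mi). ((k, i, q + p - a + m - k, p - i + m), m))"
  define ib where "ib = (\<lambda>((l::'n mi,j::'n mi,l'::'n mi,j'::'n mi),m::'n mi). (j + j' - m, l, j, m))"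
  have fw: "jf x \<in> Y \<and> ib (jf x) = x \<and> tR (jf x) = gR x" if x: "x \<in> (SIGMA p:Mp. D p)" "gR x \<noteq> 0" for x
  proof -
    obtain p k i m where xe: "x = (p,k,i,m)" by (cases x) auto
    have h1: "p \<le> a" "a \<le> q + p" "i \<le> p" "m \<le> k" "k \<le> q + p - a + m" and Pn: "P k i \<noteq> 0"
      using x(1) by (auto simp: Mp_def D_def xe)
    have Qn: "Q (q + p - a + m - k) (p - i + m) \<noteq> 0" using x(2) by (auto simp: gR_def xe)
    have e1: "i + (p - i + m) - m = p" using h1 unfolding le_fun_def fun_eq_iff plus_fun_def fun_diff_def
        apply (intro allI) subgoal premises prems for v using prems[THEN spec[of _ v]] by arith done
    have e2: "a + k + (q + p - a + m - k) = q + i + (p - i + m)" using h1 unfolding le_fun_def fun_eq_iff plus_fun_def fun_diff_def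
        apply (intro allI) subgoal premises prems for v using prems[THEN spec[of _ v]] by arith done
    have ia: "i \<le> a" using h1(3,1) by (rule order_trans)
    have s1: "msize k \<le> msize i + dP" using dP Pn by (auto simp: obnd_def)
    have s2: "msize i \<le> msize p" "msize p \<le> msize a" "msize m \<le> msize k" using h1 msize_mono by auto
    have s3: "msize (p - i + m) = msize p - msize i + msize m" using h1 by (simp add: msize_diff)
    have s4: "msize (q + p - a + m - k) \<le> msize (p - i + m) + dQ" using dQ Qn unfolding obnd_def by blast
    have "((k, i, q + p - a + m - k, p - i + m), m) \<in> Y"
      unfolding Y_def X_def L1_def J1_def L2_def J2_def using h1 ia s1 s2 s3 s4 by auto
    thus ?thesis by (simp add: xe e1 e2 tR_def gR_def jf_def ib_def)
  qed
  have bw: "ib y \<in> (SIGMA p:Mp. D p) \<and> jf (ib y) = y \<and> gR (ib y) = tR y" if y: "y \<in> Y" "tR y \<noteq> 0" for y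
  proof -
    obtain l j l' j' m where ye: "y = ((l,j,l',j'),m)" by (cases y) auto
    have c: "a + l + l' = q + j + j'" using y(2) by (auto simp: tR_def ye split: if_splits)
    have nz: "P l j \<noteq> 0" "Q l' j' \<noteq> 0" "dcoef l m j' \<noteq> 0" "ffc a (j + j' - m) \<noteq> 0"
      using y(2) by (auto simp: tR_def ye)
    have ml: "m \<le> l" using y(1) by (auto simp: Y_def ye)
    have h1: "m \<le> j'" "j + j' - m \<le> a" using nz dcoef_nz ffc_nz by auto
    have g1: "a \<le> q + (j + j' - m)" using c h1 ml unfolding le_fun_def fun_eq_iff plus_fun_def fun_diff_def
        apply (intro allI) subgoal premises prems for v using prems[THEN spec[of _ v]] by arith done
    have g2: "j \<le> j + j' - m" using h1 unfolding le_fun_def fun_eq_iff plus_fun_def fun_diff_def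
        apply (intro allI) subgoal premises prems for v using prems[THEN spec[of _ v]] by arith done
    have g3: "l \<le> q + (j + j' - m) - a + m" using c h1 ml unfolding le_fun_def fun_eq_iff plus_fun_def fun_diff_def
        apply (intro allI) subgoal premises prems for v using prems[THEN spec[of _ v]] by arith done
    have g4: "q + (j + j' - m) - a + m - l = l'" using c h1 ml unfolding le_fun_def fun_eq_iff plus_fun_def fun_diff_def
        apply (intro allI) subgoal premises prems for v using prems[THEN spec[of _ v]] by arith done
    have g5: "j + j' - m - j + m = j'" using h1 unfolding le_fun_def fun_eq_iff plus_fun_def fun_diff_def
        apply (intro allI) subgoal premises prems for v using prems[THEN spec[of _ v]] by arith done
    have "(j + j' - m, l, j, m) \<in> (SIGMA p:Mp. D p)"
      using h1 g1 g2 g3 ml nz by (auto simp: Mp_def D_def)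
    thus ?thesis by (simp add: ye g4 g5 c tR_def gR_def jf_def ib_def)
  qed
  have finS: "finite (SIGMA p:Mp. D p)" unfolding Mp_def by (intro finite_SigmaI fin_M finD)
  show ?thesis by (rule sum_bij_nz[OF finS finY fw bw])
  qed
  also have "\<dots> = (\<Sum>x\<in>X. \<Sum>m\<in>{m. m \<le> fst x}. tR (x, m))"
    unfolding Y_def by (subst sum.Sigma) (auto intro: finX fin_le)
  also have "\<dots> = sum tL X"
  proof (rule sum.cong[OF refl])
    fix x assume "x \<in> X"
    obtain l j l' j' where xe: "x = (l,j,l',j')" by (cases x) auto
    show "(\<Sum>m\<in>{m. m \<le> fst x}. tR (x, m)) = tL x"
      unfolding xe tR_def tL_def using core_multi[of l j' a j]
      by (simp add: sum_distrib_left[symmetric] sum_distrib_right[symmetric] mult.assoc)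
  qed
  finally show ?thesis using LHS by simp
qed




lemma R1:
  fixes P Q :: "('n::finite) dop"
  assumes w: "w \<in> Fset" and dP: "obnd P dP" and dQ: "obnd Q dQ"
  shows "ract (ract w P) Q = ract w (dmul P Q)"
proof (rule ext)
  fix q
  define K where "K = supp (ract w P) \<union> (\<Union>k\<in>supp w. supp (act1 k P))"
  have fw: "finite (supp w)" using w by (simp add: Fset_supp)
  have rF: "ract w P \<in> Fset" using ract_Fset[OF w obnd_Salg[OF dP]] .
  have finK: "finite K" unfolding K_def using rF fw act1_Fset[OF dP] by (auto simp: Fset_supp)
  have "ract (ract w P) Q q = (\<Sum>k'\<in>K. ract w P k' * act1 k' Q q)"
    by (rule ract_eq[OF finK]) (auto simp: K_def)
  also have "\<dots> = (\<Sum>k'\<in>K. (\<Sum>k\<in>supp w. w k * act1 k P k') * act1 k' Q q)"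
    by (simp add: ract_expand[OF w])
  also have "\<dots> = (\<Sum>k\<in>supp w. w k * (\<Sum>k'\<in>K. act1 k P k' * act1 k' Q q))"
    by (simp add: sum_distrib_right sum_distrib_left mult.assoc sum.swap[of _ K])
  also have "\<dots> = (\<Sum>k\<in>supp w. w k * ract (act1 k P) Q q)"
  proof (rule sum.cong[OF refl])
    fix k assume "k \<in> supp w"
    hence "supp (act1 k P) \<subseteq> K" by (auto simp: K_def)
    thus "w k * (\<Sum>k'\<in>K. act1 k P k' * act1 k' Q q) = w k * ract (act1 k P) Q q"
      using ract_eq[OF finK, of "act1 k P" Q q] by simp
  qed
  also have "\<dots> = (\<Sum>k\<in>supp w. w k * act1 k (dmul P Q) q)"
    by (simp add: R1_act[OF dP dQ])
  also have "\<dots> = ract w (dmul P Q) q"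
    by (simp add: ract_expand[OF w])
  finally show "ract (ract w P) Q q = ract w (dmul P Q) q" .
qed

lemma act1_iotaF: "act1 k (iotaF f) q = (if k \<le> q then f (q - k) else 0)"
proof -
  have "act1 k (iotaF f) q = (\<Sum>m\<in>{m. m \<le> k \<and> k \<le> q + m}. (if m = 0 then f (q + m - k) else 0) * ffc k m)"
    by (simp add: act1_def iotaF_def)
  also have "\<dots> = (\<Sum>m\<in>{m. m \<le> k \<and> k \<le> q + m}. if m = 0 then f (q - k) else 0)"
    by (rule sum.cong[OF refl]) (auto simp: ffc_def)
  also have "\<dots> = (if k \<le> q then f (q - k) else 0)"
    by (subst sum.delta[OF fin_M]) simp
  finally show ?thesis .
qed

lemma ract_iotaF:
  fixes w :: "('n::finite) Fel"
  assumes "w \<in> Fset"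
  shows "ract w (iotaF f) = pmul w f"
proof (rule ext)
  fix q
  have "ract w (iotaF f) q = (\<Sum>k\<in>{k. k \<le> q}. w k * act1 k (iotaF f) q)"
  proof -
    have "ract w (iotaF f) q = (\<Sum>k\<in>supp w \<union> {k. k \<le> q}. w k * act1 k (iotaF f) q)"
      by (rule ract_eq) (use assms fin_le in \<open>auto simp: Fset_supp\<close>)
    also have "\<dots> = (\<Sum>k\<in>{k. k \<le> q}. w k * act1 k (iotaF f) q)"
      by (rule sum.mono_neutral_right) (use assms fin_le in \<open>auto simp: Fset_supp act1_iotaF supp_def\<close>)
    finally show ?thesis .
  qed
  thus "ract w (iotaF f) q = pmul w f q" by (simp add: pmul_def act1_iotaF)
qed

lemma obnd_iotaF: "bnd f N \<Longrightarrow> obnd (iotaF f) N"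
  by (auto simp: obnd_def bnd_def iotaF_def)

lemma act1_Sone: "act1 j Sone = monoF j"
proof (rule ext)
  fix q
  have "act1 j Sone q = (\<Sum>m\<in>{m. m \<le> j \<and> j \<le> q + m}. if m = 0 then (if q - j = 0 then 1 else 0) else 0)"
    unfolding act1_def Sone_def by (rule sum.cong[OF refl]) (auto simp: ffc_def)
  also have "\<dots> = (if j \<le> q then (if q - j = 0 then 1 else 0) else 0)"
    by (subst sum.delta[OF fin_M]) simp
  also have "\<dots> = monoF j q"
    unfolding monoF_def le_fun_def fun_eq_iff fun_diff_def by (auto intro: order.antisym)
  finally show "act1 j Sone q = monoF j q" .
qed

lemma obnd_Sone: "obnd Sone 0" by (auto simp: obnd_def Sone_def)

lemma pmul_Fone: "pmul w Fone = w"
proof (rule ext)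
  fix q
  have "pmul w Fone q = (\<Sum>k\<in>{k. k \<le> q}. if k = q then w k else 0)"
    unfolding pmul_def Fone_def
    by (rule sum.cong[OF refl]) (auto simp: le_fun_def fun_eq_iff fun_diff_def intro: order.antisym)
  thus "pmul w Fone q = w q" by (simp add: sum.delta[OF fin_le])
qed

lemma pmul_add: "pmul w (f + g) = pmul w f + pmul w g"
  by (rule ext) (simp add: pmul_def distrib_left sum.distrib)
lemma pmul_diff: "pmul w (f - g) = pmul w f - pmul w g"
  by (rule ext) (simp add: pmul_def right_diff_distrib sum_subtractf)
lemma pmul_scale: "pmul w (Fscale c f) = Fscale c (pmul w f)"
  by (rule ext) (simp add: pmul_def Fscale_def sum_distrib_left mult.left_commute)

lemma pmul_bnd:
  assumes "bnd u N1" "bnd f N2"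
  shows "bnd (pmul u f) (N1 + N2)"
  unfolding bnd_def
proof (intro allI impI)
  fix q assume "pmul u f q \<noteq> 0"
  then obtain k where k: "k \<le> q" "u k \<noteq> 0" "f (q - k) \<noteq> 0"
    unfolding pmul_def by (rule sum.not_neutral_contains_not_neutral) auto
  have "msize q = msize k + msize (q - k)" using k by (simp add: msize_diff msize_mono)
  thus "msize q \<le> N1 + N2" using k assms by (auto simp: bnd_def intro: add_mono)
qed

lemma dmul_obnd:
  assumes dP: "obnd P d1" and dQ: "obnd Q d2"
  shows "obnd (dmul P Q) (d1 + d2)"
  unfolding obnd_def
proof (intro allI impI)
  fix q p assume "dmul P Q q p \<noteq> 0"
  then obtain k i m where h: "i \<le> p" "m \<le> k" "k \<le> q + m" "P k i \<noteq> 0" "Q (q + m - k) (p - i + m) \<noteq> 0"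
    unfolding dmul_def by (rule sum.not_neutral_contains_not_neutral) auto
  have a1: "msize k \<le> msize i + d1" using dP h by (auto simp: obnd_def)
  have a2: "msize (q + m - k) \<le> msize (p - i + m) + d2" using dQ h unfolding obnd_def by blast
  have "msize (q + m - k) = msize q + msize m - msize k" using h by (simp add: msize_diff)
  moreover have "msize (p - i + m) = msize p - msize i + msize m" using h by (simp add: msize_diff)
  moreover have "msize i \<le> msize p" "msize m \<le> msize k" "msize k \<le> msize q + msize m"
    using h msize_mono by (auto dest: msize_mono)
  ultimately show "msize q \<le> msize p + (d1 + d2)" using a1 a2 by linarith
qed

lemma dmul_zero_left: "dmul 0 Q = 0"
  by (simp add: dmul_def fun_eq_iff)
lemma dmul_zero_right: "dmul P 0 = 0"
  by (simp add: dmul_def fun_eq_iff)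
lemma iotaF_zero: "iotaF 0 = 0"
  by (simp add: iotaF_def fun_eq_iff)




fun lexlt :: "'n list \<Rightarrow> ('n \<Rightarrow> nat) \<Rightarrow> ('n \<Rightarrow> nat) \<Rightarrow> bool" where
  "lexlt [] k k' = False"
| "lexlt (v # vs) k k' = (k v < k' v \<or> (k v = k' v \<and> lexlt vs k k'))"

lemma lex_irrefl: "\<not> lexlt vs k k"
  by (induction vs) auto

lemma lex_trans: "lexlt vs a b \<Longrightarrow> lexlt vs b c \<Longrightarrow> lexlt vs a c"
  by (induction vs) auto

lemma lex_shift: "lexlt vs k k' \<Longrightarrow> lexlt vs (k + j) (k' + j)"
  by (induction vs) auto

lemma lex_total: "(\<exists>v\<in>set vs. k v \<noteq> k' v) \<Longrightarrow> lexlt vs k k' \<or> lexlt vs k' k"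
  by (induction vs) auto

lemma lex_max:
  assumes "finite K" "K \<noteq> {}"
  shows "\<exists>k0\<in>K. \<forall>k\<in>K. \<not> lexlt vs k0 k"
  using assms
proof (induction K rule: finite_ne_induct)
  case (singleton x) thus ?case by (auto simp: lex_irrefl)
next
  case (insert x K)
  then obtain k0 where k0: "k0 \<in> K" "\<forall>k\<in>K. \<not> lexlt vs k0 k" by blast
  show ?case
  proof (cases "lexlt vs k0 x")
    case True
    have "\<forall>k\<in>insert x K. \<not> lexlt vs x k"
    proof
      fix k assume "k \<in> insert x K"
      thus "\<not> lexlt vs x k"
      proof
        assume "k = x" thus ?thesis by (simp add: lex_irrefl)
      next
        assume kK: "k \<in> K"
        show ?thesis
        proof
          assume "lexlt vs x k"
          hence "lexlt vs k0 k" by (rule lex_trans[OF True])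
          thus False using k0(2) kK by blast
        qed
      qed
    qed
    thus ?thesis by blast
  next
    case False thus ?thesis using k0 by blast
  qed
qed

lemma DOM:
  fixes u f :: "('n::finite) Fel"
  assumes u: "bnd u N1" "u k1 \<noteq> 0" "msize k1 = N1"
    and f: "bnd f N2" "f k2 \<noteq> 0" "msize k2 = N2"
  shows "\<exists>q. msize q = N1 + N2 \<and> pmul u f q \<noteq> 0"
proof -
  obtain vs :: "'n list" where vs: "set vs = UNIV" using finite_list[OF finite_UNIV] by blast
  define K1 where "K1 = {k. u k \<noteq> 0 \<and> msize k = N1}"
  define K2 where "K2 = {k. f k \<noteq> 0 \<and> msize k = N2}"
  have fK1: "finite K1" unfolding K1_def by (rule finite_subset[OF _ fin_size[of N1]]) auto
  have fK2: "finite K2" unfolding K2_def by (rule finite_subset[OF _ fin_size[of N2]]) auto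
  have ne1: "K1 \<noteq> {}" using u by (auto simp: K1_def)
  have ne2: "K2 \<noteq> {}" using f by (auto simp: K2_def)
  obtain k0 where k0: "k0 \<in> K1" "\<forall>k\<in>K1. \<not> lexlt vs k0 k"
    using lex_max[OF fK1 ne1, of vs] by blast
  obtain j0 where j0: "j0 \<in> K2" "\<forall>k\<in>K2. \<not> lexlt vs j0 k"
    using lex_max[OF fK2 ne2, of vs] by blast
  have tot: "k \<noteq> k' \<Longrightarrow> lexlt vs k k' \<or> lexlt vs k' k" for k k' :: "'n mi"
    by (rule lex_total) (use vs in \<open>auto simp: fun_eq_iff\<close>)
  define q where "q = k0 + j0"
  have k0q: "k0 \<le> q" by (simp add: q_def le_fun_def)
  have "pmul u f q = (\<Sum>k\<in>{k. k \<le> q}. if k = k0 then u k * f (q - k) else 0)"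
    unfolding pmul_def
  proof (rule sum.cong[OF refl])
    fix k assume kq: "k \<in> {k. k \<le> q}"
    show "u k * f (q - k) = (if k = k0 then u k * f (q - k) else 0)"
    proof (cases "k = k0")
      case False
      show ?thesis
      proof (rule ccontr)
        assume "u k * f (q - k) \<noteq> (if k = k0 then u k * f (q - k) else 0)"
        hence nz: "u k \<noteq> 0" "f (q - k) \<noteq> 0" using False by auto
        have kq': "k \<le> q" using kq by simp
        have s: "msize q = msize k + msize (q - k)" using kq' by (simp add: msize_diff msize_mono)
        have "msize k \<le> N1" "msize (q - k) \<le> N2" using nz u f by (auto simp: bnd_def)
        moreover have "msize q = N1 + N2" using k0 j0 by (simp add: q_def K1_def K2_def)
        ultimately have "k \<in> K1" "q - k \<in> K2" using nz s by (auto simp: K1_def K2_def)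
        hence lk: "lexlt vs k k0" using tot[OF False] k0(2) by blast
        have e: "k + (q - k) = q" using kq'
          unfolding le_fun_def fun_eq_iff plus_fun_def fun_diff_def
          apply (intro allI) subgoal premises prems for v using prems[THEN spec[of _ v]] by arith done
        have l1: "lexlt vs q (k0 + (q - k))" using lex_shift[OF lk, of "q - k"] e by simp
        show False
        proof (cases "q - k = j0")
          case True
          hence "k0 + (q - k) = q" by (simp add: q_def)
          thus False using l1 by (simp add: lex_irrefl)
        next
          case False
          hence "lexlt vs (q - k) j0" using tot[OF False] j0 \<open>q - k \<in> K2\<close> by blast
          hence "lexlt vs (k0 + (q - k)) q" using lex_shift[of vs "q - k" j0 k0] by (simp add: q_def add.commute)
          hence "lexlt vs q q" by (rule lex_trans[OF l1])
          thus False by (simp add: lex_irrefl)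
        qed
      qed
    qed simp
  qed
  also have "\<dots> = u k0 * f (q - k0)" using k0q by (simp add: sum.delta[OF fin_le])
  finally have pq: "pmul u f q = u k0 * f (q - k0)" .
  have "q - k0 = j0" by (simp add: q_def fun_eq_iff fun_diff_def)
  hence "pmul u f q = u k0 * f j0" using pq by simp
  moreover have "u k0 \<noteq> 0" "f j0 \<noteq> 0" using k0 j0 by (auto simp: K1_def K2_def)
  moreover have "msize q = N1 + N2" using k0 j0 by (simp add: q_def K1_def K2_def)
  ultimately show ?thesis by auto
qed




lemma symb_eq:
  assumes "ord S = ereal (real \<mu>)"
  shows "symb S k i = (if msize k = msize i + \<mu> then S k i else 0)"
proof -
  have "(ereal (real (msize i) - real (msize k)) = - ord S) \<longleftrightarrow> msize k = msize i + \<mu>"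
    using assms by auto
  thus ?thesis by (simp add: symb_def)
qed

lemma Fset_add: "u \<in> Fset \<Longrightarrow> v \<in> Fset \<Longrightarrow> u + v \<in> Fset"
  unfolding Fset_def mem_Collect_eq by (rule finite_subset[of _ "{k. u k \<noteq> 0} \<union> {k. v k \<noteq> 0}"]) auto
lemma Fset_scale: "u \<in> Fset \<Longrightarrow> Fscale c u \<in> Fset"
  unfolding Fset_def Fscale_def mem_Collect_eq by (rule finite_subset[of _ "{k. u k \<noteq> 0}"]) auto

lemma exmax:
  fixes w :: "('n::finite) Fel"
  assumes "w \<in> Fset" "w q0 \<noteq> 0"
  shows "\<exists>k0. w k0 \<noteq> 0 \<and> bnd w (msize k0) \<and> msize q0 \<le> msize k0"
proof -
  have f: "finite (msize ` supp w)" using assms by (simp add: Fset_supp)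
  have ne: "msize ` supp w \<noteq> {}" using assms by (auto simp: supp_def)
  obtain k0 where k0: "k0 \<in> supp w" "msize k0 = Max (msize ` supp w)"
    using Max_in[OF f ne] by auto
  have "bnd w (msize k0)" unfolding bnd_def k0(2)
  proof (intro allI impI)
    fix q assume "w q \<noteq> 0"
    thus "msize q \<le> Max (msize ` supp w)" by (intro Max_ge[OF f]) (auto simp: supp_def)
  qed
  moreover have "msize q0 \<le> msize k0" unfolding k0(2) using assms by (intro Max_ge[OF f]) (auto simp: supp_def)
  ultimately show ?thesis using k0 by (auto simp: supp_def)
qed

lemma D2:
  fixes w :: "('n::finite) Fel"
  assumes reg: "regular S" and oS: "ord S = ereal (real \<mu>)"
    and w: "w \<in> Fset" "w k0 \<noteq> 0" "bnd w (msize k0)"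
  shows "\<exists>q. msize q = msize k0 + \<mu> \<and> ract w S q \<noteq> 0"
proof -
  define d where "d = msize k0"
  define wt where "wt = (\<lambda>k. if msize k = d then w k else 0)"
  have swt: "supp wt \<subseteq> supp w" by (auto simp: supp_def wt_def)
  have fw: "finite (supp w)" using w by (simp add: Fset_supp)
  have wtF: "wt \<in> Fset" using swt fw by (simp add: Fset_supp finite_subset)
  have wt0: "wt \<noteq> 0" using w by (auto simp: wt_def d_def fun_eq_iff intro!: exI[of _ k0])
  have dS: "obnd S \<mu>" using oS by (intro ord_obnd) simp
  have inj: "inj_on (\<lambda>w. ract w (symb S)) Fset" using reg by (simp add: regular_def)
  have zF: "(0::'n Fel) \<in> Fset" by (simp add: Fset_def)
  have "ract wt (symb S) \<noteq> ract 0 (symb S)"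
    using inj_onD[OF inj _ wtF zF] wt0 by blast
  then obtain q where q: "ract wt (symb S) q \<noteq> 0" by (auto simp: ract_zero fun_eq_iff)
  have qd: "msize q = d + \<mu>"
  proof -
    obtain k where k: "k \<in> supp wt" "act1 k (symb S) q \<noteq> 0"
      using q unfolding ract_expand[OF wtF] by (rule sum.not_neutral_contains_not_neutral) auto
    obtain m where m: "m \<le> k" "k \<le> q + m" "symb S (q + m - k) m \<noteq> 0"
      using k(2) unfolding act1_def by (rule sum.not_neutral_contains_not_neutral) auto
    have "msize (q + m - k) = msize m + \<mu>" using m(3) by (simp add: symb_eq[OF oS] split: if_splits)
    moreover have "msize (q + m - k) = msize q + msize m - msize k" using m by (simp add: msize_diff)
    moreover have "msize k = d" using k(1) by (auto simp: supp_def wt_def split: if_splits)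
    moreover have "msize k \<le> msize q + msize m" using m(2) msize_mono by fastforce
    ultimately show ?thesis by linarith
  qed
  have "ract w S q = ract wt (symb S) q"
  proof -
    have "ract w S q = (\<Sum>k\<in>supp w. w k * act1 k S q)" by (rule ract_eq[OF fw]) simp
    also have "\<dots> = (\<Sum>k\<in>supp w. wt k * act1 k (symb S) q)"
    proof (rule sum.cong[OF refl])
      fix k assume kw: "k \<in> supp w"
      have kd: "msize k \<le> d" using kw w by (auto simp: bnd_def supp_def d_def)
      have trm: "S (q + m - k) m \<noteq> 0 \<Longrightarrow> m \<le> k \<Longrightarrow> k \<le> q + m \<Longrightarrow> msize k = d \<and> msize (q + m - k) = msize m + \<mu>" for m
      proof -
        assume h: "S (q + m - k) m \<noteq> 0" "m \<le> k" "k \<le> q + m"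
        have "msize (q + m - k) \<le> msize m + \<mu>" using dS h by (auto simp: obnd_def)
        moreover have "msize (q + m - k) = msize q + msize m - msize k" using h by (simp add: msize_diff)
        moreover have "msize k \<le> msize q + msize m" using h(3) msize_mono by fastforce
        ultimately show ?thesis using qd kd by linarith
      qed
      show "w k * act1 k S q = wt k * act1 k (symb S) q"
      proof (cases "msize k = d")
        case True
        have "act1 k S q = act1 k (symb S) q"
          unfolding act1_def
          by (rule sum.cong[OF refl]) (auto simp: symb_eq[OF oS] dest: trm)
        thus ?thesis using True by (simp add: wt_def)
      next
        case False
        have "act1 k S q = 0" unfolding act1_def
          by (rule sum.neutral) (use False trm in auto)
        thus ?thesis using False by (simp add: wt_def)
      qed
    qed
    also have "\<dots> = ract wt (symb S) q" by (rule ract_eq[OF fw swt, symmetric])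
    finally show ?thesis .
  qed
  thus ?thesis using q qd d_def by auto
qed

lemma D2_nz:
  fixes w :: "('n::finite) Fel"
  assumes "regular S" "ord S = ereal (real \<mu>)" "w \<in> Fset" "w \<noteq> 0"
  shows "ract w S \<noteq> 0"
proof -
  obtain q0 where "w q0 \<noteq> 0" using assms by (auto simp: fun_eq_iff)
  then obtain k0 where "w k0 \<noteq> 0" "bnd w (msize k0)" using exmax assms by blast
  thus ?thesis using D2[OF assms(1,2,3)] by (auto simp: fun_eq_iff)
qed

lemma D2_bnd:
  fixes w :: "('n::finite) Fel"
  assumes "regular S" "ord S = ereal (real \<mu>)" "w \<in> Fset" "bnd (ract w S) (N + \<mu>)"
  shows "bnd w N"
  unfolding bnd_def
proof (intro allI impI, rule ccontr)
  fix q0 assume q0: "w q0 \<noteq> 0" "\<not> msize q0 \<le> N"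
  obtain k0 where k0: "w k0 \<noteq> 0" "bnd w (msize k0)" "msize q0 \<le> msize k0" using exmax[OF assms(3) q0(1)] by blast
  obtain q where q: "msize q = msize k0 + \<mu>" "ract w S q \<noteq> 0" using D2[OF assms(1,2,3) k0(1,2)] by blast
  have "msize q \<le> N + \<mu>" using assms(4) q(2) by (auto simp: bnd_def)
  thus False using q(1) q0(2) k0(3) by linarith
qed

lemma TS_inj:
  fixes u v :: "('n::finite) Fel"
  assumes "regular S" "ord S = ereal (real \<mu>)" "u \<in> Fset" "v \<in> Fset" "ract u S = ract v S"
  shows "u = v"
proof (rule ccontr)
  assume ne: "u \<noteq> v"
  let ?d = "u + Fscale (-1) v"
  have dF: "?d \<in> Fset" using assms by (intro Fset_add Fset_scale)
  have "?d \<noteq> 0" using ne by (auto simp: fun_eq_iff Fscale_def)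
  hence "ract ?d S \<noteq> 0" using D2_nz[OF assms(1,2) dF] by blast
  moreover have "ract ?d S = ract u S + Fscale (-1) (ract v S)"
    using assms by (simp add: ract_add Fset_scale ract_scale)
  ultimately show False using assms(5) by (auto simp: fun_eq_iff Fscale_def)
qed




function Lc :: "(('n::finite) mi \<Rightarrow> 'n Fel) \<Rightarrow> 'n mi \<Rightarrow> 'n mi \<Rightarrow> complex" where
  "Lc T q j = (T j q - (\<Sum>m\<in>{m. m \<le> j \<and> m \<noteq> j \<and> j \<le> q + m}. Lc T (q + m - j) m * ffc j m)) / ffc j j"
  by auto
termination by (relation "measure (\<lambda>(T,q,j). msize j)") (auto intro: msize_strict)

declare Lc.simps[simp del]

lemma act1_Lc: "act1 j (Lc T) = T j"
proof (rule ext)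
  fix q
  show "act1 j (Lc T) q = T j q"
    unfolding act1_split[of j "Lc T" q] Lc.simps[of T q j] using ffc_self_nz[of j] by simp
qed

lemma obnd_Lc:
  assumes "\<And>j. bnd (T j) (msize j + d)"
  shows "obnd (Lc T) d"
proof -
  have "\<forall>q. Lc T q j \<noteq> 0 \<longrightarrow> msize q \<le> msize j + d" for j
  proof (induction j rule: measure_induct_rule[of msize])
    case (less j)
    show ?case
    proof (intro allI impI, rule ccontr)
      fix q assume nz: "Lc T q j \<noteq> 0" and big: "\<not> msize q \<le> msize j + d"
      have t0: "T j q = 0" using assms[of j] big by (auto simp: bnd_def)
      have s0: "(\<Sum>m\<in>{m. m \<le> j \<and> m \<noteq> j \<and> j \<le> q + m}. Lc T (q + m - j) m * ffc j m) = 0"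
      proof (rule sum.neutral, rule ballI)
        fix m assume m: "m \<in> {m. m \<le> j \<and> m \<noteq> j \<and> j \<le> q + m}"
        hence lt: "msize m < msize j" using msize_strict by blast
        have "msize (q + m - j) = msize q + msize m - msize j" using m by (simp add: msize_diff)
        moreover have "msize j \<le> msize q + msize m" using m msize_mono by fastforce
        ultimately have "\<not> msize (q + m - j) \<le> msize m + d" using big by linarith
        hence "Lc T (q + m - j) m = 0" using less[OF lt] by blast
        thus "Lc T (q + m - j) m * ffc j m = 0" by simp
      qed
      have "Lc T q j = 0" by (subst Lc.simps) (simp add: t0 s0)
      thus False using nz by simp
    qed
  qed
  thus ?thesis by (auto simp: obnd_def)
qed

lemma act1_zero:
  fixes P :: "('n::finite) dop" and q :: "'n mi"
  shows "act1 0 P q = P q 0"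
proof -
  have e: "{m::'n mi. m \<le> 0 \<and> 0 \<le> q + m} = {0}" by (auto simp: le_fun_def fun_eq_iff)
  show ?thesis by (simp add: act1_def e ffc_def)
qed

lemma pmul_assoc: "pmul (pmul u f) g = pmul u (pmul f (g::('n::finite) Fel))"
proof (rule ext)
  fix q
  have "pmul (pmul u f) g q = (\<Sum>(k,i)\<in>(SIGMA k:{k. k \<le> q}. {i. i \<le> k}). u i * f (k - i) * g (q - k))"
    unfolding pmul_def sum_distrib_right by (rule sum.Sigma) (auto simp: fin_le)
  also have "\<dots> = (\<Sum>(i,l)\<in>(SIGMA i:{i. i \<le> q}. {l. l \<le> q - i}). u i * (f l * g (q - i - l)))"
  proof (rule sum.reindex_bij_witness[where j="\<lambda>(k,i). (i, k - i)" and i="\<lambda>(i,l). (i + l, i)"])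
    fix a assume "a \<in> (SIGMA k:{k. k \<le> q}. {i. i \<le> k})"
    then obtain k i where a: "a = (k,i)" "k \<le> q" "i \<le> k" by auto
    have e1: "i + (k - i) = k" using a(3) unfolding le_fun_def fun_eq_iff plus_fun_def fun_diff_def
      apply (intro allI) subgoal premises prems for v using prems[THEN spec[of _ v]] by arith done
    have e2: "i \<le> q" using a(3,2) by (rule order_trans)
    have e3: "k - i \<le> q - i" using a(2,3) unfolding le_fun_def fun_eq_iff plus_fun_def fun_diff_def
      apply (intro allI) subgoal premises prems for v using prems[THEN spec[of _ v]] by arith done
    have e4: "q - i - (k - i) = q - k" using a(2,3) unfolding le_fun_def fun_eq_iff plus_fun_def fun_diff_def
      apply (intro allI) subgoal premises prems for v using prems[THEN spec[of _ v]] by arith done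
    show "(case (case a of (k,i) \<Rightarrow> (i, k - i)) of (i,l) \<Rightarrow> (i + l, i)) = a" using a e1 by simp
    show "(case a of (k,i) \<Rightarrow> (i, k - i)) \<in> (SIGMA i:{i. i \<le> q}. {l. l \<le> q - i})" using a e2 e3 by simp
    show "(case (case a of (k,i) \<Rightarrow> (i, k - i)) of (i,l) \<Rightarrow> u i * (f l * g (q - i - l))) = (case a of (k,i) \<Rightarrow> u i * f (k - i) * g (q - k))"
      using a e4 by simp
  next
    fix b assume "b \<in> (SIGMA i:{i. i \<le> q}. {l. l \<le> q - i})"
    then obtain i l where b: "b = (i,l)" "i \<le> q" "l \<le> q - i" by auto
    have e1: "i + l \<le> q" using b(2,3) unfolding le_fun_def fun_eq_iff plus_fun_def fun_diff_def
      apply (intro allI) subgoal premises prems for v using prems[THEN spec[of _ v]] by arith done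
    have e2: "i + l - i = l" by (simp add: fun_eq_iff)
    show "(case (case b of (i,l) \<Rightarrow> (i + l, i)) of (k,i) \<Rightarrow> (i, k - i)) = b" using b e2 by simp
    show "(case b of (i,l) \<Rightarrow> (i + l, i)) \<in> (SIGMA k:{k. k \<le> q}. {i. i \<le> k})" using b e1 by (simp add: le_fun_def)
  qed
  also have "\<dots> = pmul u (pmul f g) q"
    unfolding pmul_def sum_distrib_left by (rule sum.Sigma[symmetric]) (auto simp: fin_le)
  finally show "pmul (pmul u f) g q = pmul u (pmul f g) q" .
qed

lemma K1:
  fixes S L :: "('n::finite) dop"
  assumes dS: "obnd S dS" and dL: "obnd L dL" and f: "f \<in> Fset"
  shows "dmul S (iotaF f) = dmul L S \<longleftrightarrow> (\<forall>j. ract (act1 j L) S = pmul (act1 j S) f)"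
proof -
  obtain N where N: "bnd f N" using Fset_bnd[OF f] by blast
  have dI: "obnd (iotaF f) N" using N by (rule obnd_iotaF)
  have a: "ract (act1 j L) S = act1 j (dmul L S)" for j using R1_act[OF dL dS] by (simp add: fun_eq_iff)
  have b: "pmul (act1 j S) f = act1 j (dmul S (iotaF f))" for j
    using R1_act[OF dS dI] ract_iotaF[OF act1_Fset[OF dS]] by (simp add: fun_eq_iff)
  show ?thesis
  proof
    assume "dmul S (iotaF f) = dmul L S"
    thus "\<forall>j. ract (act1 j L) S = pmul (act1 j S) f" by (simp add: a b)
  next
    assume "\<forall>j. ract (act1 j L) S = pmul (act1 j S) f"
    hence "act1 j (dmul S (iotaF f)) = act1 j (dmul L S)" for j by (simp add: a b)
    thus "dmul S (iotaF f) = dmul L S" by (rule faithful)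
  qed
qed

lemma K2:
  fixes S L :: "('n::finite) dop"
  assumes dS: "obnd S dS" and dL: "obnd L dL" and f: "f \<in> Fset" and w: "w \<in> Fset"
    and eq: "dmul S (iotaF f) = dmul L S"
  shows "ract (ract w L) S = pmul (ract w S) f"
proof -
  obtain N where N: "bnd f N" using Fset_bnd[OF f] by blast
  have dI: "obnd (iotaF f) N" using N by (rule obnd_iotaF)
  have "ract (ract w L) S = ract w (dmul L S)" by (rule R1[OF w dL dS])
  also have "\<dots> = ract w (dmul S (iotaF f))" by (simp add: eq)
  also have "\<dots> = ract (ract w S) (iotaF f)" by (rule R1[OF w dS dI, symmetric])
  also have "\<dots> = pmul (ract w S) f" by (rule ract_iotaF[OF ract_Fset[OF w obnd_Salg[OF dS]]])
  finally show ?thesis .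
qed

lemma UNQ:
  fixes S L L' :: "('n::finite) dop"
  assumes reg: "regular S" and oS: "ord S = ereal (real \<mu>)" and f: "f \<in> Fset"
    and L: "L \<in> Salg" "dmul S (iotaF f) = dmul L S"
    and L': "L' \<in> Salg" "dmul S (iotaF f) = dmul L' S"
  shows "L = L'"
proof -
  have dS: "obnd S \<mu>" using oS by (intro ord_obnd) simp
  obtain d where d: "obnd L d" using Salg_obnd[OF L(1)] by blast
  obtain d' where d': "obnd L' d'" using Salg_obnd[OF L'(1)] by blast
  have h: "ract (act1 j L) S = ract (act1 j L') S" for j
    using K1[OF dS d f] K1[OF dS d' f] L(2) L'(2) by simp
  show ?thesis
  proof (rule faithful)
    fix j show "act1 j L = act1 j L'"
      by (rule TS_inj[OF reg oS act1_Fset[OF d] act1_Fset[OF d'] h])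
  qed
qed

lemma EXS:
  fixes S :: "('n::finite) dop"
  assumes reg: "regular S" and oS: "ord S = ereal (real \<mu>)" and f: "f \<in> Fset" "bnd f df"
    and img: "\<And>j. \<exists>u\<in>Fset. ract u S = pmul (act1 j S) f"
  shows "\<exists>L. obnd L df \<and> dmul S (iotaF f) = dmul L S"
proof -
  have dS: "obnd S \<mu>" using oS by (intro ord_obnd) simp
  define T where "T j = (SOME u. u \<in> Fset \<and> ract u S = pmul (act1 j S) f)" for j
  have T: "T j \<in> Fset \<and> ract (T j) S = pmul (act1 j S) f" for j
  proof -
    have ex: "\<exists>u. u \<in> Fset \<and> ract u S = pmul (act1 j S) f" using img[of j] by blast
    show ?thesis unfolding T_def by (rule someI_ex[OF ex])
  qed
  have Tb: "bnd (T j) (msize j + df)" for j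
  proof (rule D2_bnd[OF reg oS])
    show "T j \<in> Fset" using T by blast
    have "bnd (pmul (act1 j S) f) (msize j + \<mu> + df)" by (rule pmul_bnd[OF act1_bnd[OF dS] f(2)])
    thus "bnd (ract (T j) S) (msize j + df + \<mu>)" using T[of j] by (simp add: add.commute add.left_commute)
  qed
  define L where "L = Lc T"
  have dL: "obnd L df" unfolding L_def by (rule obnd_Lc[OF Tb])
  have "\<forall>j. ract (act1 j L) S = pmul (act1 j S) f" using T by (simp add: L_def act1_Lc)
  hence "dmul S (iotaF f) = dmul L S" using K1[OF dS dL f(1)] by blast
  thus ?thesis using dL by blast
qed




lemma obnd_add: "obnd P d1 \<Longrightarrow> obnd Q d2 \<Longrightarrow> obnd (P + Q) (d1 + d2)"
  unfolding obnd_def by (metis add.right_neutral add_cancel_right_left add_le_mono le_add1 le_trans plus_fun_apply)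

lemma obnd_dscale: "obnd P d \<Longrightarrow> obnd (dscale c P) d"
  unfolding obnd_def dscale_def by auto

lemma obnd_zero: "obnd 0 d" by (simp add: obnd_def)

lemma Fset_diff: "u \<in> Fset \<Longrightarrow> v \<in> Fset \<Longrightarrow> u - v \<in> Fset"
  unfolding Fset_def mem_Collect_eq by (rule finite_subset[of _ "{k. u k \<noteq> 0} \<union> {k. v k \<noteq> 0}"]) auto

theorem theorem5p18:
  fixes \<mu> :: nat and W A :: "('n::finite) Fel set" and S :: "'n dop"
  assumes W: "W \<in> Gr \<mu>"
    and A: "Fsubalgebra A"
    and WA: "{pmul w f | w f. w \<in> W \<and> f \<in> A} = W"
    and S: "sato_op \<mu> W S"
  shows "(\<forall>f\<in>A. (\<exists>!L. L \<in> Salg \<and> dmul S (iotaF f) = dmul L S) \<and> ord (LS S f) = degF f)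
    \<and> (inj_on (LS S) A
       \<and> LS S Fone = Sone
       \<and> (\<forall>f\<in>A. \<forall>g\<in>A. LS S (f + g) = LS S f + LS S g)
       \<and> (\<forall>c. \<forall>f\<in>A. LS S (Fscale c f) = dscale c (LS S f))
       \<and> (\<forall>f\<in>A. \<forall>g\<in>A. LS S (pmul f g) = dmul (LS S f) (LS S g)))
    \<and> (\<forall>f\<in>A. \<forall>w\<in>Fset. (w \<circ>\<^sub>F LS S f) \<circ>\<^sub>F S = pmul (w \<circ>\<^sub>F S) f)"
proof -
  have reg: "regular S" and oS: "ord S = ereal (real \<mu>)" and Wd: "W = (\<lambda>w. ract w S) ` Fset"
    using S by (auto simp: sato_op_def)
  have AF: "A \<subseteq> Fset" and A1: "Fone \<in> A" and Aadd: "\<And>f g. f \<in> A \<Longrightarrow> g \<in> A \<Longrightarrow> f + g \<in> A"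
    and Amul: "\<And>f g. f \<in> A \<Longrightarrow> g \<in> A \<Longrightarrow> pmul f g \<in> A" and Asc: "\<And>c f. f \<in> A \<Longrightarrow> Fscale c f \<in> A"
    using A by (auto simp: Fsubalgebra_def)
  have dS: "obnd S \<mu>" using oS by (intro ord_obnd) simp
  have SS: "S \<in> Salg" by (rule obnd_Salg[OF dS])
  have WAm: "pmul w f \<in> W" if "w \<in> W" "f \<in> A" for w f
  proof -
    have "pmul w f \<in> {pmul w f | w f. w \<in> W \<and> f \<in> A}" using that by blast
    thus ?thesis using WA by simp
  qed
  have img: "\<exists>u\<in>Fset. ract u S = pmul (act1 j S) f" if f: "f \<in> A" for f j
  proof -
    have "act1 j S \<in> W" unfolding Wd using mono_Fset[of j] ract_mono[of j S] by (metis image_eqI)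
    hence "pmul (act1 j S) f \<in> W" using WAm f by blast
    thus ?thesis unfolding Wd by auto
  qed
  have ex: "\<exists>L. obnd L d \<and> dmul S (iotaF f) = dmul L S" if "f \<in> A" "bnd f d" for f d
    by (rule EXS[OF reg oS _ that(2) img[OF that(1)]]) (use that AF in auto)
  have ex1: "\<exists>!L. L \<in> Salg \<and> dmul S (iotaF f) = dmul L S" if f: "f \<in> A" for f
  proof -
    have fF: "f \<in> Fset" using f AF by auto
    obtain d where "bnd f d" using Fset_bnd[OF fF] by blast
    then obtain L where L: "obnd L d" "dmul S (iotaF f) = dmul L S" using ex[OF f] by blast
    show ?thesis
    proof (rule ex1I[of _ L])
      show "L \<in> Salg \<and> dmul S (iotaF f) = dmul L S" using L obnd_Salg by blast
      fix L' assume "L' \<in> Salg \<and> dmul S (iotaF f) = dmul L' S"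
      thus "L' = L" using UNQ[OF reg oS fF] L obnd_Salg by blast
    qed
  qed
  have LSp: "LS S f \<in> Salg \<and> dmul S (iotaF f) = dmul (LS S f) S" if "f \<in> A" for f
    unfolding LS_def by (rule theI'[OF ex1[OF that]])
  have LSe: "LS S f = L" if "f \<in> A" "L \<in> Salg" "dmul S (iotaF f) = dmul L S" for f L
    using UNQ[OF reg oS _ _ _ that(2,3)] LSp[OF that(1)] that(1) AF by blast
  have Kf: "ract (act1 j (LS S f)) S = pmul (act1 j S) f" if f: "f \<in> A" for f j
  proof -
    obtain d where d: "obnd (LS S f) d" using Salg_obnd LSp[OF f] by blast
    show ?thesis using K1[OF dS d] LSp[OF f] f AF by blast
  qed
  have LSo: "obnd (LS S f) (SOME d. obnd (LS S f) d)" if "f \<in> A" for f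
    using Salg_obnd[of "LS S f"] LSp[OF that] by (metis someI_ex)
  define u0 where "u0 = act1 0 S"
  have u0b: "bnd u0 \<mu>" using act1_bnd[OF dS, of 0] by (simp add: u0_def)
  obtain q0 where q0: "msize q0 = \<mu>" "u0 q0 \<noteq> 0"
  proof -
    have "monoF 0 (0::'n mi) \<noteq> 0" "bnd (monoF (0::'n mi)) (msize (0::'n mi))" by (auto simp: monoF_def bnd_def)
    from D2[OF reg oS mono_Fset this] show ?thesis using that by (auto simp: u0_def ract_mono)
  qed
  have dom0: "pmul u0 h \<noteq> 0" if h: "h \<in> Fset" "h \<noteq> 0" for h
  proof -
    obtain k where "h k \<noteq> 0" using h by (auto simp: fun_eq_iff)
    then obtain k2 where k2: "h k2 \<noteq> 0" "bnd h (msize k2)" using exmax[OF h(1)] by blast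
    obtain q where "pmul u0 h q \<noteq> 0" using DOM[OF u0b q0(2) q0(1) k2(2) k2(1) refl] by blast
    thus ?thesis by auto
  qed

  have part1: "\<forall>f\<in>A. (\<exists>!L. L \<in> Salg \<and> dmul S (iotaF f) = dmul L S) \<and> ord (LS S f) = degF f"
  proof
    fix f assume f: "f \<in> A"
    have fF: "f \<in> Fset" using f AF by auto
    have "ord (LS S f) = degF f"
    proof (cases "f = 0")
      case True
      have "LS S f = 0"
        by (rule LSe[OF f]) (auto simp: True iotaF_zero dmul_zero_left dmul_zero_right intro: obnd_Salg[OF obnd_zero])
      thus ?thesis by (simp add: True degF_def iotaF_zero)
    next
      case False
      then obtain k where "f k \<noteq> 0" by (auto simp: fun_eq_iff)
      then obtain k2 where k2: "f k2 \<noteq> 0" "bnd f (msize k2)" using exmax[OF fF] by blast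
      define df where "df = msize k2"
      obtain L where L: "obnd L df" "dmul S (iotaF f) = dmul L S" using ex[OF f] k2 df_def by blast
      have LL: "LS S f = L" using LSe[OF f obnd_Salg[OF L(1)] L(2)] .
      have up: "ord L \<le> ereal (real df)" by (rule obnd_ord[OF L(1)])
      have dg: "degF f = ereal (real df)"
      proof (rule order.antisym)
        show "degF f \<le> ereal (real df)" unfolding degF_def
          by (rule obnd_ord[OF obnd_iotaF]) (use k2 df_def in simp)
        have "ereal (real (msize k2) - real (msize (0::'n mi))) \<le> degF f" unfolding degF_def
          by (rule ord_upper) (simp add: iotaF_def k2)
        thus "ereal (real df) \<le> degF f" by (simp add: df_def)
      qed
      obtain q' where q': "msize q' = \<mu> + df" "pmul u0 f q' \<noteq> 0"
        using DOM[OF u0b q0(2) q0(1) k2(2) k2(1)] df_def by blast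
      have "ract (act1 0 L) S q' \<noteq> 0" using Kf[OF f, of 0] q'(2) LL by (simp add: u0_def)
      then obtain k where k: "k \<in> supp (act1 0 L)" "act1 k S q' \<noteq> 0"
        unfolding ract_expand[OF act1_Fset[OF L(1)]] by (rule sum.not_neutral_contains_not_neutral) auto
      have "msize q' \<le> msize k + \<mu>" using act1_bnd[OF dS, of k] k(2) by (auto simp: bnd_def)
      hence kd: "df \<le> msize k" using q'(1) by simp
      have "L k 0 \<noteq> 0" using k(1) by (simp add: supp_def act1_zero)
      hence "ereal (real (msize k) - real (msize (0::'n mi))) \<le> ord L" by (rule ord_upper)
      hence "ereal (real df) \<le> ord L" using kd by (simp add: order_trans[rotated])
      thus ?thesis using up dg LL by simp
    qed
    thus "(\<exists>!L. L \<in> Salg \<and> dmul S (iotaF f) = dmul L S) \<and> ord (LS S f) = degF f" using ex1[OF f] by blast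
  qed

  have inj: "inj_on (LS S) A"
  proof (rule inj_onI)
    fix f g assume f: "f \<in> A" and g: "g \<in> A" and e: "LS S f = LS S g"
    have "pmul u0 f = pmul u0 g" using Kf[OF f, of 0] Kf[OF g, of 0] e by (simp add: u0_def)
    hence "pmul u0 (f - g) = 0" by (simp add: pmul_diff)
    moreover have "f - g \<in> Fset" using f g AF by (intro Fset_diff) auto
    ultimately have "f - g = 0" using dom0 by blast
    thus "f = g" by simp
  qed

  have one: "LS S Fone = Sone"
  proof (rule LSe[OF A1 obnd_Salg[OF obnd_Sone]])
    show "dmul S (iotaF Fone) = dmul Sone S"
      using K1[OF dS obnd_Sone, of Fone] A1 AF
      by (auto simp: act1_Sone ract_mono pmul_Fone)
  qed

  have add: "\<forall>f\<in>A. \<forall>g\<in>A. LS S (f + g) = LS S f + LS S g"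
  proof (intro ballI)
    fix f g assume f: "f \<in> A" and g: "g \<in> A"
    obtain d1 where d1: "obnd (LS S f) d1" using Salg_obnd LSp[OF f] by blast
    obtain d2 where d2: "obnd (LS S g) d2" using Salg_obnd LSp[OF g] by blast
    have dd: "obnd (LS S f + LS S g) (d1 + d2)" by (rule obnd_add[OF d1 d2])
    show "LS S (f + g) = LS S f + LS S g"
    proof (rule LSe[OF Aadd[OF f g] obnd_Salg[OF dd]])
      have "ract (act1 j (LS S f + LS S g)) S = pmul (act1 j S) (f + g)" for j
        by (simp add: act1_add ract_add[OF act1_Fset[OF d1] act1_Fset[OF d2]] Kf[OF f] Kf[OF g] pmul_add)
      thus "dmul S (iotaF (f + g)) = dmul (LS S f + LS S g) S"
        using K1[OF dS dd, of "f + g"] Aadd[OF f g] AF by blast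
    qed
  qed

  have scl: "\<forall>c. \<forall>f\<in>A. LS S (Fscale c f) = dscale c (LS S f)"
  proof (intro allI ballI)
    fix c f assume f: "f \<in> A"
    obtain d1 where d1: "obnd (LS S f) d1" using Salg_obnd LSp[OF f] by blast
    have dd: "obnd (dscale c (LS S f)) d1" by (rule obnd_dscale[OF d1])
    show "LS S (Fscale c f) = dscale c (LS S f)"
    proof (rule LSe[OF Asc[OF f] obnd_Salg[OF dd]])
      have "ract (act1 j (dscale c (LS S f))) S = pmul (act1 j S) (Fscale c f)" for j
        by (simp add: act1_scale ract_scale[OF act1_Fset[OF d1]] Kf[OF f] pmul_scale)
      thus "dmul S (iotaF (Fscale c f)) = dmul (dscale c (LS S f)) S"
        using K1[OF dS dd, of "Fscale c f"] Asc[OF f] AF by blast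
    qed
  qed

  have mul: "\<forall>f\<in>A. \<forall>g\<in>A. LS S (pmul f g) = dmul (LS S f) (LS S g)"
  proof (intro ballI)
    fix f g assume f: "f \<in> A" and g: "g \<in> A"
    obtain d1 where d1: "obnd (LS S f) d1" using Salg_obnd LSp[OF f] by blast
    obtain d2 where d2: "obnd (LS S g) d2" using Salg_obnd LSp[OF g] by blast
    have dd: "obnd (dmul (LS S f) (LS S g)) (d1 + d2)" by (rule dmul_obnd[OF d1 d2])
    have gF: "g \<in> Fset" using g AF by auto
    show "LS S (pmul f g) = dmul (LS S f) (LS S g)"
    proof (rule LSe[OF Amul[OF f g] obnd_Salg[OF dd]])
      have "ract (act1 j (dmul (LS S f) (LS S g))) S = pmul (act1 j S) (pmul f g)" for j
      proof -
        have "act1 j (dmul (LS S f) (LS S g)) = ract (act1 j (LS S f)) (LS S g)"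
          using R1_act[OF d1 d2] by (simp add: fun_eq_iff)
        hence "ract (act1 j (dmul (LS S f) (LS S g))) S = pmul (ract (act1 j (LS S f)) S) g"
          using K2[OF dS d2 gF act1_Fset[OF d1]] LSp[OF g] by simp
        also have "\<dots> = pmul (pmul (act1 j S) f) g" by (simp add: Kf[OF f])
        also have "\<dots> = pmul (act1 j S) (pmul f g)" by (rule pmul_assoc)
        finally show ?thesis .
      qed
      thus "dmul S (iotaF (pmul f g)) = dmul (dmul (LS S f) (LS S g)) S"
        using K1[OF dS dd, of "pmul f g"] Amul[OF f g] AF by blast
    qed
  qed

  have part3: "\<forall>f\<in>A. \<forall>w\<in>Fset. (w \<circ>\<^sub>F LS S f) \<circ>\<^sub>F S = pmul (w \<circ>\<^sub>F S) f"
  proof (intro ballI)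
    fix f and w :: "'n Fel" assume f: "f \<in> A" and w: "w \<in> Fset"
    obtain d1 where d1: "obnd (LS S f) d1" using Salg_obnd LSp[OF f] by blast
    show "(w \<circ>\<^sub>F LS S f) \<circ>\<^sub>F S = pmul (w \<circ>\<^sub>F S) f"
      using K2[OF dS d1 _ w] LSp[OF f] f AF by blast
  qed

  show ?thesis using part1 inj one add scl mul part3 by blast
qed


end
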